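(* Let $A\in\mathbb{R}^{m\times n}$, $b\in\mathbb{R}^m$ with $Ax=b$ consistent, and let $\{x^k\}_{k\ge0}$, $\{p_k\}_{k\ge0}$, $\{\delta_k\}$, $\{\eta_k^i\}$, $\{S_k\}$ be generated by the IS-Krylov algorithm described in the context, with $r^k=Ax^k-b$ and $j_k=\max\{k-\ell+1,0\}$. Then for any integers $t,v,k$ with $j_k\le t<v\le k$: (i) $\langle p_v,p_t\rangle=0$; (ii) $\langle S_t^\top r^v,S_t^\top r^t\rangle=0$ if $v=t+1$ or $j_k=j_t$, and otherwise $$\langle S_t^\top r^v,S_t^\top r^t\rangle=-\sum_{w=t}^{v-1}\sum_{i=j_t}^{j_k-1}\delta_w\eta_t^i\langle p_w,p_i\rangle.$$
   Context: IS-Krylov algorithm: given a probability space $(\Omega,\mathcal{F},\mathbf{P})$ of matrices in $\mathbb{R}^{m\times q}$, a positive integer $\ell$ and $x^0\in\operatorname{Range}(A^\top)$: draw $S_0\in\Omega$ (redrawing until $S_0^\top(Ax^0-b)\neq0$), set $p_0=d_0=-A^\top S_0S_0^\top(Ax^0-b)$; for $k=0,1,\dots$: $\delta_k=\|S_k^\top(Ax^k-b)\|_2^2/\|p_k\|_2^2$; $x^{k+1}=x^k+\delta_kp_k$; draw $S_{k+1}\in\Omega$ (redrawing until $S_{k+1}^\top(Ax^{k+1}-b)\neq0$); with $j_{k+1}=\max\{k-\ell+2,0\}$ set $d_{k+1}=-A^\top S_{k+1}S_{k+1}^\top(Ax^{k+1}-b)$, $\eta_{k+1}^i=\langle d_{k+1},p_i\rangle/\|p_i\|_2^2$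 for $i=j_{k+1},\dots,k$, and $p_{k+1}=d_{k+1}-\sum_{i=j_{k+1}}^k\eta_{k+1}^ip_i$. Empty sums are zero. *)

theory Defs
  imports "HOL-Analysis.Analysis"
begin

definition jidx :: "nat \<Rightarrow> nat \<Rightarrow> nat" where
  "jidx l k = nat (max (int k - int l + 1) 0)"

definition resid :: "real^'n^'m \<Rightarrow> real^'m \<Rightarrow> real^'n \<Rightarrow> real^'m" where
  "resid A b y = A *v y - b"

text \<open>The redrawing rule means that
  each accepted S k satisfies S_k^T r^k \<noteq> 0.\<close>
definition IS_Krylov ::
  "real^'n^'m \<Rightarrow> real^'m \<Rightarrow> (real^'q^'m) set \<Rightarrow> nat \<Rightarrow> (nat \<Rightarrow> real^'q^'m)
   \<Rightarrow> (nat \<Rightarrow> real^'n) \<Rightarrow> (nat \<Rightarrow> real^'n) \<Rightarrow> (nat \<Rightarrow> real^'n)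
   \<Rightarrow> (nat \<Rightarrow> real) \<Rightarrow> (nat \<Rightarrow> nat \<Rightarrow> real) \<Rightarrow> bool" where
  "IS_Krylov A b \<Omega> l S x p d \<delta> \<eta> \<longleftrightarrow>
     x 0 \<in> range (\<lambda>y. transpose A *v y) \<and>
     (\<forall>k. S k \<in> \<Omega>) \<and>
     (\<forall>k. transpose (S k) *v resid A b (x k) \<noteq> 0) \<and>
     (\<forall>k. d k = - (transpose A *v (S k *v (transpose (S k) *v resid A b (x k))))) \<and>
     p 0 = d 0 \<and>
     (\<forall>k. \<delta> k = (norm (transpose (S k) *v resid A b (x k)))\<^sup>2 / (norm (p k))\<^sup>2) \<and>
     (\<forall>k. x (Suc k) = x k + \<delta> k *\<^sub>R p k) \<and>
     (\<forall>k. \<forall>i\<in>{jidx l (Suc k)..k}. \<eta> (Suc k) i = (d (Suc k) \<bullet> p i) / (norm (p i))\<^sup>2) \<and>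
     (\<forall>k. p (Suc k) = d (Suc k) - (\<Sum>i\<in>{jidx l (Suc k)..k}. \<eta> (Suc k) i *\<^sub>R p i))"

end

theory Submission
  imports Defs
begin

lemma tmv_inner: "(transpose M *v u) \<bullet> w = u \<bullet> (M *v (w::real^'a)) " for M :: "real^'a^'b"
  by (metis dot_lmul_matrix transpose_transpose vector_transpose_matrix)

lemma mv_sum: "finite I \<Longrightarrow> (M::real^'n^'m) *v (\<Sum>i\<in>I. f i) = (\<Sum>i\<in>I. M *v f i)"
  by (induction I rule: finite_induct) (auto simp: matrix_vector_right_distrib)

lemma jidx_mono: "a \<le> b \<Longrightarrow> jidx l a \<le> jidx l b"
  unfolding jidx_def by auto

lemma jidx_le: "l \<ge> 1 \<Longrightarrow> jidx l t \<le> t"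
  unfolding jidx_def by auto

lemma jidx_0: "l \<ge> 1 \<Longrightarrow> jidx l 0 = 0"
  unfolding jidx_def by auto

context
  fixes A :: "real^'n^'m" and b :: "real^'m" and \<Omega> :: "(real^'q^'m) set"
    and l :: nat and S :: "nat \<Rightarrow> real^'q^'m"
    and x p d :: "nat \<Rightarrow> real^'n" and \<delta> :: "nat \<Rightarrow> real" and \<eta> :: "nat \<Rightarrow> nat \<Rightarrow> real"
  assumes alg: "IS_Krylov A b \<Omega> l S x p d \<delta> \<eta>" and l_pos: "l \<ge> 1"
begin

lemma p_eq: "p t = d t - (\<Sum>i\<in>{jidx l t..<t}. \<eta> t i *\<^sub>R p i)"
proof (cases t)
  case 0 then show ?thesis using alg by (simp add: IS_Krylov_def)
next
  case (Suc k)
  then show ?thesis using alg by (simp add: IS_Krylov_def atLeastLessThanSuc_atLeastAtMost)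
qed

lemma eta_eq: assumes "i \<in> {jidx l t..<t}" shows "\<eta> t i = (d t \<bullet> p i) / (norm (p i))\<^sup>2"
proof (cases t)
  case 0 then show ?thesis using assms by simp
next
  case (Suc k)
  then show ?thesis using alg assms by (simp add: IS_Krylov_def atLeastLessThanSuc_atLeastAtMost)
qed

lemma delta_eq: "\<delta> k = (norm (transpose (S k) *v resid A b (x k)))\<^sup>2 / (norm (p k))\<^sup>2"
  using alg by (simp add: IS_Krylov_def)

lemma s_nz: "transpose (S k) *v resid A b (x k) \<noteq> 0"
  using alg by (simp add: IS_Krylov_def)

lemma x_eq: "t \<le> v \<Longrightarrow> x v = x t + (\<Sum>u\<in>{t..<v}. \<delta> u *\<^sub>R p u)"
proof (induction v rule: dec_induct)
  case base then show ?case by simp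
next
  case (step v)
  have "x (Suc v) = x v + \<delta> v *\<^sub>R p v" using alg by (simp add: IS_Krylov_def)
  then show ?case using step by (simp add: algebra_simps)
qed

lemma orth_Q: "jidx l v \<le> t \<Longrightarrow> t < v \<Longrightarrow> p v \<bullet> p t = 0"
proof (induction v arbitrary: t rule: less_induct)
  case (less v)
  define W where "W = {jidx l v..<v}"
  have tW: "t \<in> W" using less.prems by (simp add: W_def)
  have z: "\<eta> v i * (p i \<bullet> p t) = 0" if "i \<in> W - {t}" for i
  proof -
    have iv: "jidx l v \<le> i" "i < v" using that by (auto simp: W_def)
    show ?thesis
    proof (cases "i < t")
      case True
      have "jidx l t \<le> jidx l v" by (rule jidx_mono) (use less.prems in auto)
      then have "p t \<bullet> p i = 0" using less.IH[of t i] less.prems True iv by auto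
      then show ?thesis by (simp add: inner_commute)
    next
      case False
      then have "t < i" using that by auto
      have "jidx l i \<le> jidx l v" by (rule jidx_mono) (use iv in auto)
      then have "p i \<bullet> p t = 0" using less.IH[of i t] less.prems \<open>t < i\<close> iv by auto
      then show ?thesis by simp
    qed
  qed
  have "p v \<bullet> p t = d v \<bullet> p t - (\<Sum>i\<in>W. \<eta> v i * (p i \<bullet> p t))"
    by (subst p_eq) (simp add: W_def inner_diff_left inner_sum_left)
  also have "(\<Sum>i\<in>W. \<eta> v i * (p i \<bullet> p t)) = \<eta> v t * (p t \<bullet> p t)"
  proof -
    have "(\<Sum>i\<in>W-{t}. \<eta> v i * (p i \<bullet> p t)) = 0" using z by (intro sum.neutral) auto
    then show ?thesis using tW by (subst sum.remove[of W t]) (auto simp: W_def)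
  qed
  finally have e: "p v \<bullet> p t = d v \<bullet> p t - \<eta> v t * (p t \<bullet> p t)" .
  show ?case
  proof (cases "p t = 0")
    case True then show ?thesis by simp
  next
    case False
    have "\<eta> v t = (d v \<bullet> p t) / (p t \<bullet> p t)"
      using eta_eq[of t v] tW by (simp add: W_def power2_norm_eq_inner)
    then show ?thesis using e False by simp
  qed
qed

lemma orth: "jidx l k \<le> t \<Longrightarrow> t < v \<Longrightarrow> v \<le> k \<Longrightarrow> p v \<bullet> p t = 0"
  using orth_Q jidx_mono[of v k l] by force

lemma resid_eq: "t \<le> v \<Longrightarrow> resid A b (x v) = resid A b (x t) + (\<Sum>u\<in>{t..<v}. \<delta> u *\<^sub>R (A *v p u))"
  by (simp add: x_eq resid_def matrix_vector_right_distrib mv_sum matrix_vector_mult_scaleR algebra_simps)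

lemma d_inner: "d k \<bullet> y = - ((transpose (S k) *v resid A b (x k)) \<bullet> (transpose (S k) *v (A *v y)))"
proof -
  have "d k = - (transpose A *v (S k *v (transpose (S k) *v resid A b (x k))))"
    using alg unfolding IS_Krylov_def by blast
  then have "d k \<bullet> y = - ((S k *v (transpose (S k) *v resid A b (x k))) \<bullet> (A *v y))"
    by (simp only: tmv_inner inner_minus_left)
  also have "\<dots> = - ((transpose (S k) *v resid A b (x k)) \<bullet> (transpose (S k) *v (A *v y)))"
    using tmv_inner[of "transpose (S k)"] by (simp only: transpose_transpose)
  finally show ?thesis .
qed

lemma R: assumes z: "A *v z = b"
  shows "p t \<noteq> 0 \<and> p t \<bullet> (x t - z) = - (norm (transpose (S t) *v resid A b (x t)))\<^sup>2"
proof (induction t rule: less_induct)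
  case (less t)
  define W where "W = {jidx l t..<t}"
  have pj: "p j \<bullet> (x t - z) = 0" if "j \<in> W" for j
  proof -
    have jt: "jidx l t \<le> j" "j < t" using that by (auto simp: W_def)
    have IHj: "p j \<noteq> 0" "p j \<bullet> (x j - z) = - (norm (transpose (S j) *v resid A b (x j)))\<^sup>2"
      using less.IH[of j] jt by auto
    have "x t - z = (x j - z) + (\<Sum>u\<in>{j..<t}. \<delta> u *\<^sub>R p u)"
      using x_eq[of j t] jt by (simp add: algebra_simps)
    then have "p j \<bullet> (x t - z) = p j \<bullet> ((x j - z) + (\<Sum>u\<in>{j..<t}. \<delta> u *\<^sub>R p u))"
      by (rule arg_cong[where f="\<lambda>v. p j \<bullet> v"])
    also have "\<dots> = p j \<bullet> (x j - z) + (\<Sum>u\<in>{j..<t}. \<delta> u * (p j \<bullet> p u))"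
      by (simp only: inner_add_right inner_sum_right inner_scaleR_right)
    also have "(\<Sum>u\<in>{j..<t}. \<delta> u * (p j \<bullet> p u)) = \<delta> j * (p j \<bullet> p j)"
    proof (subst sum.remove[of _ j])
      show "\<delta> j * (p j \<bullet> p j) + (\<Sum>u\<in>{j..<t} - {j}. \<delta> u * (p j \<bullet> p u)) = \<delta> j * (p j \<bullet> p j)"
      proof -
        have "\<delta> u * (p j \<bullet> p u) = 0" if "u \<in> {j..<t} - {j}" for u
        proof -
          have "jidx l u \<le> jidx l t" by (rule jidx_mono) (use that in auto)
          then have "p u \<bullet> p j = 0" using orth_Q[of u j] that jt by auto
          then show ?thesis by (simp add: inner_commute)
        qed
        then have "(\<Sum>u\<in>{j..<t} - {j}. \<delta> u * (p j \<bullet> p u)) = 0" by (intro sum.neutral) blast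
        then show ?thesis by simp
      qed
    qed (use jt in auto)
    also have "\<delta> j * (p j \<bullet> p j) = (norm (transpose (S j) *v resid A b (x j)))\<^sup>2"
      using IHj(1) by (simp add: delta_eq power2_norm_eq_inner[symmetric])
    finally show ?thesis using IHj(2) by simp
  qed
  have dz: "d t \<bullet> (x t - z) = - (norm (transpose (S t) *v resid A b (x t)))\<^sup>2"
  proof -
    have "A *v (x t - z) = resid A b (x t)" using z by (simp add: resid_def matrix_vector_mult_diff_distrib)
    then show ?thesis by (simp add: d_inner power2_norm_eq_inner)
  qed
  have "p t \<bullet> (x t - z) = d t \<bullet> (x t - z) - (\<Sum>j\<in>W. \<eta> t j * (p j \<bullet> (x t - z)))"
    by (subst p_eq) (simp add: W_def inner_diff_left inner_sum_left)
  also have "\<dots> = d t \<bullet> (x t - z)" using pj by simp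
  finally have e: "p t \<bullet> (x t - z) = - (norm (transpose (S t) *v resid A b (x t)))\<^sup>2" using dz by simp
  moreover have "p t \<noteq> 0"
  proof
    assume "p t = 0"
    then have "(norm (transpose (S t) *v resid A b (x t)))\<^sup>2 = 0" using e by simp
    then show False using s_nz[of t] by simp
  qed
  ultimately show ?case by simp
qed


lemma G:
  assumes z: "A *v z = b" and rg: "jidx l k \<le> t" "t < v" "v \<le> k"
  shows "(transpose (S t) *v resid A b (x v)) \<bullet> (transpose (S t) *v resid A b (x t)) =
       - (\<Sum>w\<in>{t..<v}. \<Sum>i\<in>{jidx l t..<jidx l k}. \<delta> w * \<eta> t i * (p w \<bullet> p i))"
proof -
  define T where "T = transpose (S t)"
  define s where "s = T *v resid A b (x t)"
  define E where "E = (\<lambda>w. \<Sum>i\<in>{jidx l t..<jidx l k}. \<eta> t i * (p w \<bullet> p i))"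
  have jtk: "jidx l t \<le> jidx l k" "jidx l k \<le> t" using rg jidx_mono[of t k l] by auto
  have "T *v resid A b (x v) = T *v (resid A b (x t) + (\<Sum>u\<in>{t..<v}. \<delta> u *\<^sub>R (A *v p u)))"
    using resid_eq[of t v] rg by simp
  also have "\<dots> = s + (\<Sum>w\<in>{t..<v}. \<delta> w *\<^sub>R (T *v (A *v p w)))"
    unfolding s_def by (simp only: matrix_vector_right_distrib mv_sum[OF finite_atLeastLessThan] matrix_vector_mult_scaleR)
  finally have "(T *v resid A b (x v)) \<bullet> s = s \<bullet> s + (\<Sum>w\<in>{t..<v}. \<delta> w * ((T *v (A *v p w)) \<bullet> s))"
    by (simp only: inner_add_left inner_sum_left inner_scaleR_left)
  also have "(\<Sum>w\<in>{t..<v}. \<delta> w * ((T *v (A *v p w)) \<bullet> s)) = (\<Sum>w\<in>{t..<v}. \<delta> w * (- (p t \<bullet> p w + E w)))"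
  proof (rule sum.cong[OF refl])
    fix w assume w: "w \<in> {t..<v}"
    have "(T *v (A *v p w)) \<bullet> s = - (d t \<bullet> p w)"
      using d_inner[of t "p w"] by (simp only: T_def s_def inner_commute[of _ "transpose (S t) *v resid A b (x t)"])
    also have "d t = p t + (\<Sum>i\<in>{jidx l t..<t}. \<eta> t i *\<^sub>R p i)"
      using p_eq[of t] by (simp add: algebra_simps)
    then have "d t \<bullet> p w = p t \<bullet> p w + (\<Sum>i\<in>{jidx l t..<t}. \<eta> t i * (p i \<bullet> p w))"
      by (simp add: inner_add_left inner_sum_left)
    also have "(\<Sum>i\<in>{jidx l t..<t}. \<eta> t i * (p i \<bullet> p w)) =
       (\<Sum>i\<in>{jidx l t..<jidx l k}. \<eta> t i * (p i \<bullet> p w)) + (\<Sum>i\<in>{jidx l k..<t}. \<eta> t i * (p i \<bullet> p w))"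
      using jtk by (simp add: sum.atLeastLessThan_concat)
    also have "(\<Sum>i\<in>{jidx l k..<t}. \<eta> t i * (p i \<bullet> p w)) = 0"
    proof (intro sum.neutral ballI)
      fix i assume i: "i \<in> {jidx l k..<t}"
      have "p w \<bullet> p i = 0" using orth[of k i w] i w rg by auto
      then show "\<eta> t i * (p i \<bullet> p w) = 0" by (simp add: inner_commute)
    qed
    also have "(\<Sum>i\<in>{jidx l t..<jidx l k}. \<eta> t i * (p i \<bullet> p w)) = E w"
      unfolding E_def by (simp add: inner_commute)
    finally show "\<delta> w * ((T *v (A *v p w)) \<bullet> s) = \<delta> w * (- (p t \<bullet> p w + E w))" by simp
  qed
  also have "\<dots> = - (\<Sum>w\<in>{t..<v}. \<delta> w * (p t \<bullet> p w)) - (\<Sum>w\<in>{t..<v}. \<delta> w * E w)"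
  proof -
    have eq: "(\<lambda>w. \<delta> w * (- (p t \<bullet> p w + E w))) = (\<lambda>w. - (\<delta> w * (p t \<bullet> p w)) - \<delta> w * E w)"
      by (auto simp: algebra_simps fun_eq_iff)
    show ?thesis by (simp only: eq sum_subtractf sum_negf)
  qed
  also have "(\<Sum>w\<in>{t..<v}. \<delta> w * (p t \<bullet> p w)) = \<delta> t * (p t \<bullet> p t)"
  proof -
    have "(\<Sum>w\<in>{t..<v}-{t}. \<delta> w * (p t \<bullet> p w)) = 0"
    proof (intro sum.neutral ballI)
      fix w assume w: "w \<in> {t..<v}-{t}"
      have "p w \<bullet> p t = 0" using orth[of k t w] w rg by auto
      then show "\<delta> w * (p t \<bullet> p w) = 0" by (simp add: inner_commute)
    qed
    then show ?thesis using rg by (subst sum.remove[of _ t]) auto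
  qed
  also have "\<delta> t * (p t \<bullet> p t) = s \<bullet> s"
    using R[OF z, of t] by (simp add: delta_eq s_def T_def power2_norm_eq_inner[symmetric])
  finally have "(T *v resid A b (x v)) \<bullet> s = - (\<Sum>w\<in>{t..<v}. \<delta> w * E w)" by simp
  also have "\<dots> = - (\<Sum>w\<in>{t..<v}. \<Sum>i\<in>{jidx l t..<jidx l k}. \<delta> w * \<eta> t i * (p w \<bullet> p i))"
    unfolding E_def by (simp add: sum_distrib_left mult.assoc)
  finally show ?thesis unfolding T_def s_def .
qed

lemma G0:
  assumes rg: "jidx l k \<le> t" "t < v" "v \<le> k" and c: "v = Suc t \<or> jidx l k = jidx l t"
  shows "(\<Sum>w\<in>{t..<v}. \<Sum>i\<in>{jidx l t..<jidx l k}. \<delta> w * \<eta> t i * (p w \<bullet> p i)) = 0"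
proof (cases "jidx l k = jidx l t")
  case True then show ?thesis by simp
next
  case False
  then have v: "v = Suc t" using c by auto
  have "\<delta> t * \<eta> t i * (p t \<bullet> p i) = 0" if "i \<in> {jidx l t..<jidx l k}" for i
    using orth_Q[of t i] that rg by auto
  then have "(\<Sum>i\<in>{jidx l t..<jidx l k}. \<delta> t * \<eta> t i * (p t \<bullet> p i)) = 0"
    by (intro sum.neutral) blast
  then show ?thesis using v by simp
qed

end

theorem proposition4p4:
  fixes A :: "real^'n^'m" and b :: "real^'m" and \<Omega> :: "(real^'q^'m) set"
    and l :: nat and S :: "nat \<Rightarrow> real^'q^'m"
    and x p d :: "nat \<Rightarrow> real^'n" and \<delta> :: "nat \<Rightarrow> real" and \<eta> :: "nat \<Rightarrow> nat \<Rightarrow> real"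
    and t v k :: nat
  assumes consistent: "\<exists>z. A *v z = b"
    and l_pos: "l \<ge> 1"
    and alg: "IS_Krylov A b \<Omega> l S x p d \<delta> \<eta>"
    and range: "jidx l k \<le> t" "t < v" "v \<le> k"
  shows "p v \<bullet> p t = 0 \<and>
    ((v = Suc t \<or> jidx l k = jidx l t) \<longrightarrow>
       (transpose (S t) *v resid A b (x v)) \<bullet> (transpose (S t) *v resid A b (x t)) = 0) \<and>
    (\<not> (v = Suc t \<or> jidx l k = jidx l t) \<longrightarrow>
       (transpose (S t) *v resid A b (x v)) \<bullet> (transpose (S t) *v resid A b (x t)) =
       - (\<Sum>w\<in>{t..<v}. \<Sum>i\<in>{jidx l t..<jidx l k}. \<delta> w * \<eta> t i * (p w \<bullet> p i)))"
proof -
  obtain z where z: "A *v z = b" using consistent by blast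
  note g = G[OF alg l_pos z range]
  show ?thesis
    using orth[OF alg l_pos range] g G0[OF alg l_pos range] by auto
qed

end
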